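(* Let $X$ be a definable set in $(Z,R)^{eq}$ which is both $Z$-internal and $R$-internal. Then $X$ is finite.
   Context: Let $\mathfrak C$ be a monster model, $Z,R$ definable subsets of $\mathfrak C$ which are stably embedded (subsets of $Z^n$, resp. $R^n$, definable with parameters from $\mathfrak C$ are definable with parameters from $Z$, resp. $R$) and fully orthogonal (for all $m,n$, every definable subset of $Z^m\times R^n$ is a finite union of sets $U\times V$ with $U\subseteq Z^m$, $V\subseteq R^n$ definable). $(Z,R)^{eq}$ is the two-sorted structure $(Z,R)$ (no connection between the sorts) expanded by all imaginary sorts; "definable" means definable in $(Z,R)^{eq}$ with parameters. A definable set $X$ is $Z$-internal (resp. $R$-internal) if there is a definable surjection from $Z^k$ (resp. $R^k$) onto $X$ for some $k$. *)

theory Defs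
  imports Main
begin

datatype 'r fm =
    Eq nat nat
  | Rel 'r "nat list"
  | Neg "'r fm"
  | Conj "'r fm" "'r fm"
  | Ex nat "'r fm"

primrec fv :: "'r fm \<Rightarrow> nat set" where
  "fv (Eq i j) = {i, j}"
| "fv (Rel r is) = set is"
| "fv (Neg \<phi>) = fv \<phi>"
| "fv (Conj \<phi> \<psi>) = fv \<phi> \<union> fv \<psi>"
| "fv (Ex x \<phi>) = fv \<phi> - {x}"

definition fo_structure :: "'a set \<Rightarrow> ('r \<Rightarrow> 'a list set) \<Rightarrow> bool" where
  "fo_structure M I \<longleftrightarrow> M \<noteq> {} \<and> (\<forall>r. \<forall>xs \<in> I r. set xs \<subseteq> M)"

primrec sat :: "'a set \<Rightarrow> ('r \<Rightarrow> 'a list set) \<Rightarrow> 'r fm \<Rightarrow> (nat \<Rightarrow> 'a) \<Rightarrow> bool" where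
  "sat M I (Eq i j) v = (v i = v j)"
| "sat M I (Rel r is) v = (map v is \<in> I r)"
| "sat M I (Neg \<phi>) v = (\<not> sat M I \<phi> v)"
| "sat M I (Conj \<phi> \<psi>) v = (sat M I \<phi> v \<and> sat M I \<psi> v)"
| "sat M I (Ex x \<phi>) v = (\<exists>a\<in>M. sat M I \<phi> (v(x := a)))"

definition lists_of :: "nat \<Rightarrow> 'a set \<Rightarrow> 'a list set" where
  "lists_of n A = {xs. length xs = n \<and> set xs \<subseteq> A}"

definition env :: "nat \<Rightarrow> 'a list \<Rightarrow> (nat \<Rightarrow> 'a) \<Rightarrow> nat \<Rightarrow> 'a" where
  "env n xs p = (\<lambda>i. if i < n then xs ! i else p i)"

text \<open>S \<subseteq> M^n is definable with parameters from A: variables 0..n-1 are the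
  tuple variables, all other free variables are parameters taken from A.\<close>
definition def_over :: "'a set \<Rightarrow> ('r \<Rightarrow> 'a list set) \<Rightarrow> 'a set \<Rightarrow> nat \<Rightarrow> 'a list set \<Rightarrow> bool" where
  "def_over M I A n S \<longleftrightarrow>
     (\<exists>(\<phi>::'r fm) p. (\<forall>i. p i \<in> M) \<and> (\<forall>i\<in>fv \<phi>. n \<le> i \<longrightarrow> p i \<in> A) \<and>
        S = {xs \<in> lists_of n M. sat M I \<phi> (env n xs p)})"

definition definable :: "'a set \<Rightarrow> ('r \<Rightarrow> 'a list set) \<Rightarrow> nat \<Rightarrow> 'a list set \<Rightarrow> bool" where
  "definable M I n S \<longleftrightarrow> def_over M I M n S"

definition definable_subset :: "'a set \<Rightarrow> ('r \<Rightarrow> 'a list set) \<Rightarrow> 'a set \<Rightarrow> bool" where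
  "definable_subset M I Z \<longleftrightarrow> Z \<subseteq> M \<and> definable M I 1 {[z] | z. z \<in> Z}"

definition stably_embedded :: "'a set \<Rightarrow> ('r \<Rightarrow> 'a list set) \<Rightarrow> 'a set \<Rightarrow> bool" where
  "stably_embedded M I Z \<longleftrightarrow>
     (\<forall>n S. S \<subseteq> lists_of n Z \<longrightarrow> definable M I n S \<longrightarrow> def_over M I Z n S)"

definition appset :: "'a list set \<Rightarrow> 'a list set \<Rightarrow> 'a list set" where
  "appset U V = {xs @ ys | xs ys. xs \<in> U \<and> ys \<in> V}"

definition fully_orthogonal :: "'a set \<Rightarrow> ('r \<Rightarrow> 'a list set) \<Rightarrow> 'a set \<Rightarrow> 'a set \<Rightarrow> bool" where
  "fully_orthogonal M I Z R \<longleftrightarrow>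
     (\<forall>m n S. S \<subseteq> appset (lists_of m Z) (lists_of n R) \<longrightarrow> definable M I (m + n) S \<longrightarrow>
        (\<exists>F. finite F \<and>
             (\<forall>(U, V)\<in>F. U \<subseteq> lists_of m Z \<and> definable M I m U \<and>
                          V \<subseteq> lists_of n R \<and> definable M I n V) \<and>
             S = (\<Union>(U, V)\<in>F. appset U V)))"

text \<open>A definable set of (Z,R)^eq, presented as D/E: D a definable subset of the
  sort Z^m x R^n (tuples xs @ ys), E a definable equivalence relation on D.\<close>
definition ZR_interpretable ::
  "'a set \<Rightarrow> ('r \<Rightarrow> 'a list set) \<Rightarrow> 'a set \<Rightarrow> 'a set \<Rightarrow> nat \<Rightarrow> nat \<Rightarrow> 'a list set \<Rightarrow> ('a list \<times> 'a list) set \<Rightarrow> bool" where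
  "ZR_interpretable M I Z R m n D E \<longleftrightarrow>
     D \<subseteq> appset (lists_of m Z) (lists_of n R) \<and> definable M I (m + n) D \<and>
     equiv D E \<and> definable M I (2 * (m + n)) {d @ d' | d d'. (d, d') \<in> E}"

text \<open>There is a definable surjection f : T^k \<rightarrow> D/E; its graph is given by the
  (E-invariant) definable set G of tuples as @ d with f(as) = [d]_E.\<close>
definition internal_via ::
  "'a set \<Rightarrow> ('r \<Rightarrow> 'a list set) \<Rightarrow> 'a set \<Rightarrow> nat \<Rightarrow> nat \<Rightarrow> nat \<Rightarrow> 'a list set \<Rightarrow> ('a list \<times> 'a list) set \<Rightarrow> bool" where
  "internal_via M I T m n k D E \<longleftrightarrow>
     (\<exists>G. G \<subseteq> appset (lists_of k T) D \<and> definable M I (k + (m + n)) G \<and>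
          (\<forall>as\<in>lists_of k T. \<exists>d\<in>D. {d'. as @ d' \<in> G} = E `` {d}) \<and>
          (\<forall>d\<in>D. \<exists>as\<in>lists_of k T. as @ d \<in> G))"

definition internal ::
  "'a set \<Rightarrow> ('r \<Rightarrow> 'a list set) \<Rightarrow> 'a set \<Rightarrow> nat \<Rightarrow> nat \<Rightarrow> 'a list set \<Rightarrow> ('a list \<times> 'a list) set \<Rightarrow> bool" where
  "internal M I T m n D E \<longleftrightarrow> (\<exists>k. internal_via M I T m n k D E)"

end

theory Submission
  imports Defs
begin

primrec ren :: "(nat \<Rightarrow> nat) \<Rightarrow> 'r fm \<Rightarrow> 'r fm" where
  "ren s (Eq i j) = Eq (s i) (s j)"
| "ren s (Rel r is) = Rel r (map s is)"
| "ren s (Neg \<phi>) = Neg (ren s \<phi>)"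
| "ren s (Conj \<phi> \<psi>) = Conj (ren s \<phi>) (ren s \<psi>)"
| "ren s (Ex x \<phi>) = Ex (s x) (ren s \<phi>)"

lemma sat_ren: "inj s \<Longrightarrow> sat M I (ren s \<phi>) v = sat M I \<phi> (v \<circ> s)"
proof (induction \<phi> arbitrary: v)
  case (Ex x \<phi>)
  have "\<And>a. (v(s x := a)) \<circ> s = (v \<circ> s)(x := a)"
    using Ex.prems by (auto simp: fun_eq_iff inj_eq)
  note that_eq = this
  have "sat M I (ren s (Ex x \<phi>)) v = (\<exists>a\<in>M. sat M I (ren s \<phi>) (v(s x := a)))" by simp
  also have "\<dots> = (\<exists>a\<in>M. sat M I \<phi> ((v(s x := a)) \<circ> s))" using Ex.IH Ex.prems by blast
  also have "\<dots> = (\<exists>a\<in>M. sat M I \<phi> ((v \<circ> s)(x := a)))" using that_eq by simp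
  finally show ?case by (simp only: sat.simps)
qed (auto simp: comp_def)

primrec exs :: "nat list \<Rightarrow> 'r fm \<Rightarrow> 'r fm" where
  "exs [] \<phi> = \<phi>"
| "exs (x # xs) \<phi> = Ex x (exs xs \<phi>)"

lemma sat_exs: "sat M I (exs xs \<phi>) v \<longleftrightarrow>
   (\<exists>w. (\<forall>i. i \<notin> set xs \<longrightarrow> w i = v i) \<and> (\<forall>i\<in>set xs. w i \<in> M) \<and> sat M I \<phi> w)"
proof (induction xs arbitrary: v)
  case Nil
  show ?case
  proof
    assume "sat M I (exs [] \<phi>) v"
    then show "\<exists>w. (\<forall>i. i \<notin> set [] \<longrightarrow> w i = v i) \<and> (\<forall>i\<in>set []. w i \<in> M) \<and> sat M I \<phi> w"
      by (intro exI[of _ v]) simp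
  next
    assume "\<exists>w. (\<forall>i. i \<notin> set [] \<longrightarrow> w i = v i) \<and> (\<forall>i\<in>set []. w i \<in> M) \<and> sat M I \<phi> w"
    then obtain w where "\<forall>i. w i = v i" "sat M I \<phi> w" by auto
    moreover from this(1) have "w = v" by blast
    ultimately show "sat M I (exs [] \<phi>) v" by simp
  qed
next
  case (Cons x xs)
  show ?case
  proof
    assume "sat M I (exs (x # xs) \<phi>) v"
    then obtain a w where a: "a \<in> M" "\<forall>i. i \<notin> set xs \<longrightarrow> w i = (v(x:=a)) i"
      "\<forall>i\<in>set xs. w i \<in> M" "sat M I \<phi> w"
    proof -
      assume h: "sat M I (exs (x # xs) \<phi>) v"
      then obtain a where a: "a \<in> M" "sat M I (exs xs \<phi>) (v(x := a))" by auto
      then show ?thesis using that Cons.IH[of "v(x := a)"] by blast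
    qed
    have "\<forall>i. i \<notin> set (x#xs) \<longrightarrow> w i = v i" using a(2) by auto
    moreover have "\<forall>i\<in>set (x#xs). w i \<in> M"
    proof
      fix i assume "i \<in> set (x#xs)"
      then show "w i \<in> M" using a(1,2,3) by (cases "i \<in> set xs") auto
    qed
    ultimately show "\<exists>w. (\<forall>i. i \<notin> set (x#xs) \<longrightarrow> w i = v i) \<and> (\<forall>i\<in>set (x#xs). w i \<in> M) \<and> sat M I \<phi> w"
      using a(4) by blast
  next
    assume "\<exists>w. (\<forall>i. i \<notin> set (x#xs) \<longrightarrow> w i = v i) \<and> (\<forall>i\<in>set (x#xs). w i \<in> M) \<and> sat M I \<phi> w"
    then obtain w where w: "\<forall>i. i \<notin> set (x#xs) \<longrightarrow> w i = v i" "\<forall>i\<in>set (x#xs). w i \<in> M" "sat M I \<phi> w"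
      by blast
    have "\<forall>i. i \<notin> set xs \<longrightarrow> w i = (v(x:= w x)) i" using w(1) by auto
    moreover have "\<forall>i\<in>set xs. w i \<in> M" using w(2) by simp
    ultimately have "sat M I (exs xs \<phi>) (v(x := w x))"
      using Cons.IH[of "v(x := w x)"] w(3) by blast
    then show "sat M I (exs (x # xs) \<phi>) v" using w(2) by auto
  qed
qed

lemma appset_dec:
  assumes "as @ d \<in> appset (lists_of k A) B" "length as = k"
  shows "as \<in> lists_of k A \<and> d \<in> B"
proof -
  obtain xs ys where "as @ d = xs @ ys" "xs \<in> lists_of k A" "ys \<in> B"
    using assms(1) unfolding appset_def by blast
  moreover have "length xs = k" using calculation unfolding lists_of_def by auto
  ultimately show ?thesis using assms(2) by (auto simp: append_eq_append_conv)
qed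

theorem lemma2p4:
  fixes M :: "'a set" and I :: "'r \<Rightarrow> 'a list set" and Z R :: "'a set"
    and m n :: nat and D :: "'a list set" and E :: "('a list \<times> 'a list) set"
  assumes "fo_structure M I"
    and "definable_subset M I Z" and "definable_subset M I R"
    and "stably_embedded M I Z" and "stably_embedded M I R"
    and "fully_orthogonal M I Z R"
    and "ZR_interpretable M I Z R m n D E"
    and "internal M I Z m n D E"
    and "internal M I R m n D E"
  shows "finite (D // E)"
proof -
  define N where "N = m + n"
  obtain c0 where c0: "c0 \<in> M" using assms(1) unfolding fo_structure_def by blast
  have ZM: "Z \<subseteq> M" using assms(2) unfolding definable_subset_def by (elim conjE)
  have RM: "R \<subseteq> M" using assms(3) unfolding definable_subset_def by (elim conjE)
  have Dsub: "D \<subseteq> appset (lists_of m Z) (lists_of n R)"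
    using assms(7) unfolding ZR_interpretable_def by (elim conjE)
  have eq: "equiv D E"
    using assms(7) unfolding ZR_interpretable_def by (elim conjE)
  have DM: "D \<subseteq> lists_of N M"
  proof
    fix x assume "x \<in> D"
    then obtain xs ys where "x = xs @ ys" "length xs = m" "set xs \<subseteq> Z" "length ys = n" "set ys \<subseteq> R"
      using Dsub unfolding appset_def lists_of_def by blast
    then show "x \<in> lists_of N M" using ZM RM unfolding lists_of_def N_def by auto
  qed
  obtain k G1 where G1: "G1 \<subseteq> appset (lists_of k Z) D" "definable M I (k + N) G1"
    "\<forall>as\<in>lists_of k Z. \<exists>d\<in>D. {d'. as @ d' \<in> G1} = E `` {d}"
    "\<forall>d\<in>D. \<exists>as\<in>lists_of k Z. as @ d \<in> G1"
    using assms(8) unfolding internal_def internal_via_def N_def by blast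
  obtain l G2 where G2: "G2 \<subseteq> appset (lists_of l R) D" "definable M I (l + N) G2"
    "\<forall>as\<in>lists_of l R. \<exists>d\<in>D. {d'. as @ d' \<in> G2} = E `` {d}"
    "\<forall>d\<in>D. \<exists>as\<in>lists_of l R. as @ d \<in> G2"
    using assms(9) unfolding internal_def internal_via_def N_def by blast
  obtain \<phi>1 :: "'r fm" and p1 where P1: "\<forall>i. p1 i \<in> M"
    "G1 = {xs \<in> lists_of (k + N) M. sat M I \<phi>1 (env (k + N) xs p1)}"
    using G1(2) unfolding definable_def def_over_def by blast
  obtain \<phi>2 :: "'r fm" and p2 where P2: "\<forall>i. p2 i \<in> M"
    "G2 = {xs \<in> lists_of (l + N) M. sat M I \<phi>2 (env (l + N) xs p2)}"
    using G2(2) unfolding definable_def def_over_def by blast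
  define B where "B = k + l + N"
  define s1 where "s1 = (\<lambda>i. if i < k then i else if i < k + N then l + i else B + 2 * i)"
  define s2 where "s2 = (\<lambda>i. if i < l + N then k + i else B + 2 * i + 1)"
  have inj1: "inj s1" unfolding inj_def s1_def B_def by auto
  have inj2: "inj s2" unfolding inj_def s2_def B_def by auto
  define \<psi> where "\<psi> = exs [k + l..<k + l + N] (Conj (ren s1 \<phi>1) (ren s2 \<phi>2))"
  define p where "p = (\<lambda>i. if B \<le> i then (if even (i - B) then p1 ((i - B) div 2) else p2 ((i - B) div 2)) else c0)"
  have pM: "\<forall>i. p i \<in> M" using P1(1) P2(1) c0 unfolding p_def by auto
  define S0 where "S0 = {xs \<in> lists_of (k + l) M. sat M I \<psi> (env (k + l) xs p)}"
  have S0def: "definable M I (k + l) S0"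
    unfolding definable_def def_over_def S0_def using pM by blast
  have key: "sat M I \<psi> (env (k + l) xs p) \<longleftrightarrow>
      (\<exists>d\<in>lists_of N M. take k xs @ d \<in> G1 \<and> drop k xs @ d \<in> G2)"
    if xs: "xs \<in> lists_of (k + l) M" for xs
  proof -
    have lxs: "length xs = k + l" and xsM: "set xs \<subseteq> M" using xs unfolding lists_of_def by auto
    have tk: "take k xs @ d \<in> lists_of (k + N) M" "drop k xs @ d \<in> lists_of (l + N) M"
      if "d \<in> lists_of N M" for d
      using that lxs xsM set_take_subset[of k xs] set_drop_subset[of k xs]
      unfolding lists_of_def by auto
    have e1: "w \<circ> s1 = env (k + N) (take k xs @ d) p1" and e2: "w \<circ> s2 = env (l + N) (drop k xs @ d) p2"
      if w1: "\<forall>i. i \<notin> set [k + l..<k + l + N] \<longrightarrow> w i = env (k + l) xs p i"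
      and w2: "\<forall>j<N. d ! j = w (k + l + j)" and ld: "length d = N" for w d
    proof -
      show "w \<circ> s1 = env (k + N) (take k xs @ d) p1"
      proof
        fix i
        show "(w \<circ> s1) i = env (k + N) (take k xs @ d) p1 i"
        proof (cases "i < k")
          case True then show ?thesis using w1 lxs unfolding s1_def env_def by (auto simp: nth_append)
        next
          case False
          show ?thesis
          proof (cases "i < k + N")
            case True
            then have "w (l + i) = d ! (i - k)" using w2[rule_format, of "i - k"] False by auto
            then show ?thesis using True False lxs unfolding s1_def env_def by (auto simp: nth_append)
          next
            case F2: False
            have "w (B + 2 * i) = p (B + 2 * i)" using w1 F2 unfolding B_def env_def by auto
            then show ?thesis using F2 False unfolding s1_def env_def p_def by auto
          qed
        qed
      qed
      show "w \<circ> s2 = env (l + N) (drop k xs @ d) p2"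
      proof
        fix i
        show "(w \<circ> s2) i = env (l + N) (drop k xs @ d) p2 i"
        proof (cases "i < l")
          case True then show ?thesis using w1 lxs unfolding s2_def env_def by (auto simp: nth_append)
        next
          case False
          show ?thesis
          proof (cases "i < l + N")
            case True
            then have "w (k + i) = d ! (i - l)" using w2[rule_format, of "i - l"] False
              by (auto simp: add.assoc)
            then show ?thesis using True False lxs unfolding s2_def env_def by (auto simp: nth_append)
          next
            case F2: False
            have "w (B + 2 * i + 1) = p (B + 2 * i + 1)" using w1 F2 unfolding B_def env_def by auto
            then show ?thesis using F2 False unfolding s2_def env_def p_def by auto
          qed
        qed
      qed
    qed
    show ?thesis
    proof
      assume "sat M I \<psi> (env (k + l) xs p)"
      then obtain w where w: "\<forall>i. i \<notin> set [k + l..<k + l + N] \<longrightarrow> w i = env (k + l) xs p i"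
        "\<forall>i\<in>set [k + l..<k + l + N]. w i \<in> M"
        "sat M I \<phi>1 (w \<circ> s1)" "sat M I \<phi>2 (w \<circ> s2)"
        unfolding \<psi>_def sat_exs by (auto simp: sat_ren inj1 inj2)
      define d where "d = map (\<lambda>j. w (k + l + j)) [0..<N]"
      have ld: "length d = N" and w2: "\<forall>j<N. d ! j = w (k + l + j)" unfolding d_def by auto
      have dM: "d \<in> lists_of N M" using w(2) unfolding d_def lists_of_def by auto
      show "\<exists>d\<in>lists_of N M. take k xs @ d \<in> G1 \<and> drop k xs @ d \<in> G2"
        using dM tk[OF dM] w(3,4) e1[OF w(1) w2 ld] e2[OF w(1) w2 ld] P1(2) P2(2) by auto
    next
      assume "\<exists>d\<in>lists_of N M. take k xs @ d \<in> G1 \<and> drop k xs @ d \<in> G2"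
      then obtain d where dM: "d \<in> lists_of N M" and g: "take k xs @ d \<in> G1" "drop k xs @ d \<in> G2"
        by blast
      have ld: "length d = N" and dsM: "set d \<subseteq> M" using dM unfolding lists_of_def by auto
      define w where "w = (\<lambda>i. if k + l \<le> i \<and> i < k + l + N then d ! (i - (k + l)) else env (k + l) xs p i)"
      have w1: "\<forall>i. i \<notin> set [k + l..<k + l + N] \<longrightarrow> w i = env (k + l) xs p i" unfolding w_def by auto
      have w2: "\<forall>j<N. d ! j = w (k + l + j)" unfolding w_def by auto
      have wM: "\<forall>i\<in>set [k + l..<k + l + N]. w i \<in> M" using dsM ld unfolding w_def by (auto intro!: subsetD[OF dsM] nth_mem)
      have "sat M I \<phi>1 (w \<circ> s1)" "sat M I \<phi>2 (w \<circ> s2)"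
        using g P1(2) P2(2) e1[OF w1 w2 ld] e2[OF w1 w2 ld] by auto
      then show "sat M I \<psi> (env (k + l) xs p)"
        unfolding \<psi>_def sat_exs using w1 wM by (auto simp: sat_ren inj1 inj2)
    qed
  qed
  have memS: "as @ bs \<in> S0 \<longleftrightarrow> (\<exists>d. as @ d \<in> G1 \<and> bs @ d \<in> G2)"
    if "as \<in> lists_of k Z" "bs \<in> lists_of l R" for as bs
  proof -
    have las: "length as = k" and lbs: "length bs = l" using that unfolding lists_of_def by auto
    have asbs: "as @ bs \<in> lists_of (k + l) M" using that ZM RM unfolding lists_of_def by auto
    have "as @ d \<in> G1 \<Longrightarrow> d \<in> lists_of N M" for d
      using appset_dec[of as d k Z D] G1(1) las DM by auto
    then show ?thesis unfolding S0_def using key[OF asbs] asbs las lbs by auto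
  qed
  have S0sub: "S0 \<subseteq> appset (lists_of k Z) (lists_of l R)"
  proof
    fix xs assume xs: "xs \<in> S0"
    then have xsl: "xs \<in> lists_of (k + l) M" unfolding S0_def by auto
    then have lxs: "length xs = k + l" unfolding lists_of_def by auto
    obtain d where "take k xs @ d \<in> G1" "drop k xs @ d \<in> G2"
      using xs key[OF xsl] unfolding S0_def by auto
    then have "take k xs \<in> lists_of k Z" "drop k xs \<in> lists_of l R"
      using appset_dec[of "take k xs" d k Z D] appset_dec[of "drop k xs" d l R D] G1(1) G2(1) lxs
      by (simp_all add: subset_iff)
    then show "xs \<in> appset (lists_of k Z) (lists_of l R)"
      unfolding appset_def by (metis (mono_tags, lifting) append_take_drop_id mem_Collect_eq)
  qed
  obtain F where F: "finite F"
    "\<forall>(U, V)\<in>F. U \<subseteq> lists_of k Z \<and> definable M I k U \<and> V \<subseteq> lists_of l R \<and> definable M I l V"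
    "S0 = (\<Union>(U, V)\<in>F. appset U V)"
  proof -
    have "\<exists>F. finite F \<and>
      (\<forall>(U, V)\<in>F. U \<subseteq> lists_of k Z \<and> definable M I k U \<and> V \<subseteq> lists_of l R \<and> definable M I l V) \<and>
      S0 = (\<Union>(U, V)\<in>F. appset U V)"
      using assms(6)[unfolded fully_orthogonal_def, rule_format, OF S0sub S0def] .
    then show ?thesis using that by (elim exE conjE)
  qed
  define C where "C = (\<lambda>(U, V). {E `` {d} | d as bs. d \<in> D \<and> as \<in> U \<and> bs \<in> V \<and> as @ d \<in> G1 \<and> bs @ d \<in> G2})"
  have cls: "E `` {d1} = E `` {d}" if "as \<in> lists_of k Z" "as @ d1 \<in> G1" "as @ d \<in> G1" for as d1 d
  proof -
    from bspec[OF G1(3) that(1)] obtain e where "e \<in> D" "{d'. as @ d' \<in> G1} = E `` {e}" ..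
    then have "(e, d1) \<in> E" "(e, d) \<in> E" using that(2,3) by (simp_all add: set_eq_iff)
    then show ?thesis using equiv_class_eq[OF eq, of e d1] equiv_class_eq[OF eq, of e d] by simp
  qed
  have cls2: "E `` {d1} = E `` {d}" if "as \<in> lists_of l R" "as @ d1 \<in> G2" "as @ d \<in> G2" for as d1 d
  proof -
    from bspec[OF G2(3) that(1)] obtain e where "e \<in> D" "{d'. as @ d' \<in> G2} = E `` {e}" ..
    then have "(e, d1) \<in> E" "(e, d) \<in> E" using that(2,3) by (simp_all add: set_eq_iff)
    then show ?thesis using equiv_class_eq[OF eq, of e d1] equiv_class_eq[OF eq, of e d] by simp
  qed
  have Cfin: "finite (C UV)" if "UV \<in> F" for UV
  proof -
    obtain U V where UV: "UV = (U, V)" by fastforce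
    have UZ: "U \<subseteq> lists_of k Z" and VR: "V \<subseteq> lists_of l R" using F(2) that UV by auto
    have single: "c1 = c2" if c12: "c1 \<in> C UV" "c2 \<in> C UV" for c1 c2
    proof -
      obtain d1 as1 bs1 where 1: "c1 = E `` {d1}" "as1 \<in> U" "bs1 \<in> V" "as1 @ d1 \<in> G1" "bs1 @ d1 \<in> G2"
        using c12(1) unfolding C_def UV by auto
      obtain d2 as2 bs2 where 2: "c2 = E `` {d2}" "as2 \<in> U" "bs2 \<in> V" "as2 @ d2 \<in> G1" "bs2 @ d2 \<in> G2"
        using c12(2) unfolding C_def UV by auto
      have "as1 @ bs2 \<in> S0" using F(3) \<open>UV \<in> F\<close> UV 1(2) 2(3) unfolding appset_def by blast
      moreover have a1: "as1 \<in> lists_of k Z" using subsetD[OF UZ 1(2)] .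
      moreover have b2: "bs2 \<in> lists_of l R" using subsetD[OF VR 2(3)] .
      ultimately obtain d where d: "as1 @ d \<in> G1" "bs2 @ d \<in> G2" using memS by blast
      have "E `` {d1} = E `` {d}" by (rule cls[OF a1 1(4) d(1)])
      moreover have "E `` {d2} = E `` {d}" by (rule cls2[OF b2 2(5) d(2)])
      ultimately show ?thesis using 1(1) 2(1) by simp
    qed
    have "C UV \<subseteq> {SOME c. c \<in> C UV}"
    proof
      fix c assume c: "c \<in> C UV"
      then have "(SOME c. c \<in> C UV) \<in> C UV" by (rule someI)
      then show "c \<in> {SOME c. c \<in> C UV}" using single[OF c] by simp
    qed
    then show ?thesis using finite_subset by blast
  qed
  have "D // E \<subseteq> (\<Union>UV\<in>F. C UV)"
  proof
    fix c assume "c \<in> D // E"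
    then obtain d where d: "d \<in> D" "c = E `` {d}" unfolding quotient_def by blast
    obtain as where as: "as \<in> lists_of k Z" "as @ d \<in> G1" using G1(4) d(1) by blast
    obtain bs where bs: "bs \<in> lists_of l R" "bs @ d \<in> G2" using G2(4) d(1) by blast
    have "as @ bs \<in> S0" using memS[OF as(1) bs(1)] as(2) bs(2) by blast
    then obtain U V where UV: "(U, V) \<in> F" "as @ bs \<in> appset U V" using F(3) by blast
    have UZ: "U \<subseteq> lists_of k Z" and VR: "V \<subseteq> lists_of l R" using F(2) UV(1) by auto
    obtain as' bs' where "as @ bs = as' @ bs'" "as' \<in> U" "bs' \<in> V" using UV(2) unfolding appset_def by blast
    moreover have "length as = length as'" using calculation(2) UZ as(1) unfolding lists_of_def by auto
    ultimately have "as \<in> U" "bs \<in> V" by auto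
    then have "c \<in> C (U, V)" unfolding C_def using d as bs by blast
    then show "c \<in> (\<Union>UV\<in>F. C UV)" using UV(1) by blast
  qed
  then show ?thesis using F(1) Cfin by (meson finite_UN_I finite_subset)
qed

end
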